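(* For a prime $p$, integers $M$, $N\ge1$, $s\ge1$ and an integer vector $\mathbf{a}=(a_0,\ldots,a_{s-1})$ let $$S_{s,p}(M,N;\mathbf{a})=\sum_{u=M+1}^{M+N}\mathbf{e}_p\Big(\sum_{j=0}^{s-1}a_j q_p(u+j)\Big).$$ Then for any integer $s\ge1$, $$\max_{\gcd(a_0,\ldots,a_{s-1},p)=1}|S_{s,p}(M,N;\mathbf{a})|\ll s\,p\log p$$ uniformly over integers $M$ and $N$ with $p^2>N\ge1$.
   Context: For a prime $p$ and an integer $u$ with $\gcd(u,p)=1$, the Fermat quotient $q_p(u)$ is the unique integer with $q_p(u)\equiv (u^{p-1}-1)/p \pmod p$ and $0\le q_p(u)\le p-1$; also $q_p(kp)=0$ for all $k\in\mathbb{Z}$. $\mathbf{e}_p(z)=\exp(2\pi i z/p)$. $U\ll V$ means $|U|\le cV$ for some constant $c>0$, which may depend on $s$. *)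

theory Defs
  imports "HOL-Analysis.Analysis"
begin

definition fermat_quotient :: "nat \<Rightarrow> int \<Rightarrow> int" where
  "fermat_quotient p u =
     (if int p dvd u then 0 else ((u ^ (p - 1) - 1) div int p) mod int p)"

definition e_p :: "nat \<Rightarrow> int \<Rightarrow> complex" where
  "e_p p z = exp (2 * pi * \<i> * of_int z / of_nat p)"

definition S_sum :: "nat \<Rightarrow> nat \<Rightarrow> int \<Rightarrow> int \<Rightarrow> (nat \<Rightarrow> int) \<Rightarrow> complex" where
  "S_sum s p M N a =
     (\<Sum>u\<in>{M+1..M+N}. e_p p (\<Sum>j<s. a j * fermat_quotient p (u + int j)))"

end

theory Submission
  imports Defs "HOL-Number_Theory.Number_Theory"
begin


lemma e_p_cis: "e_p p z = cis (2 * pi * of_int z / real p)"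
  unfolding e_p_def cis_conv_exp by (simp add: field_simps)

lemma norm_e_p [simp]: "norm (e_p p z) = 1"
  by (simp add: e_p_cis)

lemma e_p_add: "e_p p (x + y) = e_p p x * e_p p y"
  unfolding e_p_def by (simp add: distrib_left add_divide_distrib exp_add)

lemma e_p_0 [simp]: "e_p p 0 = 1" by (simp add: e_p_def)

lemma e_p_mult_nat: "e_p p (int k * z) = e_p p z ^ k"
  by (induction k) (auto simp: distrib_right e_p_add)

lemma e_p_period: "p > 0 \<Longrightarrow> e_p p (z + int p * k) = e_p p z"
proof -
  assume p: "p > 0"
  have "e_p p (int p * k) = cis (2 * pi * of_int k)"
    unfolding e_p_cis using p by (simp add: field_simps)
  also have "\<dots> = 1" by (rule cis_multiple_2pi) simp
  finally show ?thesis by (simp add: e_p_add)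
qed

lemma e_p_cong: "p > 0 \<Longrightarrow> [x = y] (mod int p) \<Longrightarrow> e_p p x = e_p p y"
proof -
  assume p: "p > 0" and c: "[x = y] (mod int p)"
  then obtain k where "y = x + int p * k"
    by (metis cong_iff_lin)
  thus ?thesis using e_p_period[OF p] by simp
qed

lemma fermat_int:
  fixes u :: int assumes p: "prime p" and u: "\<not> int p dvd u"
  shows "[u ^ (p - 1) = 1] (mod int p)"
proof -
  define v where "v = nat (u mod int p)"
  have p0: "int p > 0" using p prime_gt_0_nat by auto
  have uv: "[u = int v] (mod int p)" unfolding v_def using p0
    by (simp add: cong_def)
  have "\<not> p dvd v"
  proof
    assume "p dvd v"
    hence "int p dvd int v" by simp
    with uv have "int p dvd u" using cong_dvd_iff by blast
    with u show False by simp
  qed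
  hence "[v ^ (p - 1) = 1] (mod p)" using fermat_theorem p by blast
  hence "[int v ^ (p - 1) = 1] (mod int p)"
    by (metis cong_int_iff of_nat_1 of_nat_power)
  moreover have "[u ^ (p - 1) = int v ^ (p - 1)] (mod int p)" using uv by (rule cong_pow)
  ultimately show ?thesis using cong_trans by blast
qed

lemma binom_shift:
  fixes u P k :: int
  shows "\<exists>X. (u + P*k)^n = u^n + int n * P * k * u^(n-1) + P^2 * X"
proof (induction n)
  case 0
  then show ?case by (intro exI[of _ 0]) simp
next
  case (Suc n)
  then obtain X where X: "(u + P*k)^n = u^n + int n * P * k * u^(n-1) + P^2 * X" by blast
  have e: "u * u^(n-1) * int n = u^n * int n" by (cases n) auto
  have "(u + P*k)^Suc n = (u + P*k) * (u^n + int n * P * k * u^(n-1) + P^2 * X)"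
    using X by simp
  also have "\<dots> = u^Suc n + int (Suc n) * P * k * u^(Suc n - 1)
        + P^2 * (u*X + int n * k * k * u^(n-1) + P*k*X)"
    using e by (simp add: algebra_simps power2_eq_square)
  finally show ?case by blast
qed

lemma fq_shift:
  fixes u k :: int
  assumes p: "prime p" and u: "\<not> int p dvd u"
  shows "[fermat_quotient p (u + int p * k) = fermat_quotient p u - k * u ^ (p - 2)] (mod int p)"
proof -
  define P where "P = int p"
  define m where "m = p - 1"
  have p2: "p \<ge> 2" using p prime_ge_2_nat by blast
  have P0: "P > 0" unfolding P_def using p2 by simp
  have uk: "\<not> P dvd (u + P * k)" using u unfolding P_def
    by (metis dvd_add_times_triv_right_iff mult.commute)
  have "P dvd u ^ m - 1" using fermat_int[OF p u] unfolding P_def m_def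
    by (simp add: cong_iff_dvd_diff)
  then obtain \<alpha> where al: "u ^ m - 1 = P * \<alpha>" by blast
  obtain X where X: "(u + P*k)^m = u^m + int m * P * k * u^(m-1) + P^2 * X"
    using binom_shift by blast
  have "(u + P*k)^m - 1 = P * (\<alpha> + int m * k * u^(m-1) + P*X)"
    using X al by (simp add: algebra_simps power2_eq_square)
  hence d1: "((u + P*k)^m - 1) div P = \<alpha> + int m * k * u^(m-1) + P*X" using P0 by simp
  have d0: "(u^m - 1) div P = \<alpha>" using al P0 by simp
  have q1: "fermat_quotient p (u + P*k) = (\<alpha> + int m * k * u^(m-1) + P*X) mod P"
    using uk d1 unfolding fermat_quotient_def P_def m_def by simp
  have q0: "fermat_quotient p u = \<alpha> mod P"
    using u d0 unfolding fermat_quotient_def P_def m_def by simp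
  have mm: "m - 1 = p - 2" "int m + 1 = P" unfolding m_def P_def using p2 by auto
  have "(\<alpha> + int m * k * u^(m-1) + P*X) - (\<alpha> - k * u ^ (p - 2)) = P * (k * u^(p-2) + X)"
  proof -
    have "(\<alpha> + int m * k * u^(m-1) + P*X) - (\<alpha> - k * u ^ (p - 2)) = (int m + 1) * k * u^(p-2) + P*X"
      using mm(1) by (simp add: algebra_simps)
    also have "\<dots> = P * (k * u^(p-2) + X)" unfolding mm(2) by (simp add: algebra_simps)
    finally show ?thesis .
  qed
  hence "[\<alpha> + int m * k * u^(m-1) + P*X = \<alpha> - k * u ^ (p - 2)] (mod P)"
    by (metis cong_iff_dvd_diff dvd_triv_left)
  hence "[fermat_quotient p (u + P*k) = \<alpha> - k * u ^ (p - 2)] (mod P)"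
    unfolding q1 by (simp add: cong_def)
  moreover have "[\<alpha> - k * u ^ (p - 2) = fermat_quotient p u - k * u ^ (p - 2)] (mod P)"
    unfolding q0 by (simp add: cong_def mod_diff_left_eq)
  ultimately show ?thesis unfolding P_def using cong_trans by blast
qed



lemma sin_lower: assumes "0 \<le> x" "x \<le> pi/2" shows "x / 3 \<le> sin x"
proof -
  have b: "\<bar>sin x - (\<Sum>m<3. sin_coeff m * x ^ m)\<bar> \<le> inverse (fact 3) * \<bar>x\<bar> ^ 3"
    by (rule Maclaurin_sin_bound)
  have s: "(\<Sum>m<3. sin_coeff m * x ^ m) = x"
    by (simp add: numeral_3_eq_3 sin_coeff_def)
  have "fact 3 = (6::real)" by (simp add: fact_numeral)
  with b s have "x - x^3/6 \<le> sin x" using assms by (simp add: abs_if split: if_splits)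
  moreover have "x < 2" using assms pi_less_4 by linarith
  moreover have "x^3 \<le> 4 * x" 
  proof -
    have "x*x \<le> 2*2" using \<open>x < 2\<close> assms by (intro mult_mono) auto
    hence "x^2 \<le> 4" by (simp add: power2_eq_square)
    hence "x * x^2 \<le> x * 4" using assms by (intro mult_left_mono) auto
    thus ?thesis by (simp add: power3_eq_cube power2_eq_square algebra_simps)
  qed
  ultimately show ?thesis by linarith
qed

lemma norm_one_minus_cis: "cmod (1 - cis th) = 2 * \<bar>sin (th/2)\<bar>"
proof -
  have "(cmod (1 - cis th))^2 = (1 - cos th)^2 + (sin th)^2"
    by (simp add: cmod_def)
  also have "\<dots> = 2 - 2 * cos th" by (simp add: power2_eq_square algebra_simps sin_squared_eq)
  also have "\<dots> = (2 * \<bar>sin (th/2)\<bar>)^2"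
    using cos_double_sin[of "th/2"] by (simp add: power_mult_distrib)
  finally show ?thesis
    by (metis abs_of_nonneg norm_ge_zero real_sqrt_abs zero_le_mult_iff abs_ge_zero zero_le_numeral)
qed

lemma geom_bound:
  assumes p: "p > 0" and t: "0 < t" "t < p"
  shows "cmod (\<Sum>m<L. e_p p (int t) ^ m) \<le> 2 * real p * (1 / real t + 1 / real (p - t))"
proof -
  define w where "w = e_p p (int t)"
  define th where "th = 2 * pi * real t / real p"
  have w: "w = cis th" unfolding w_def th_def by (simp add: e_p_def cis_conv_exp field_simps)
  define \<mu> where "\<mu> = min t (p - t)"
  have mu: "\<mu> \<ge> 1" "real \<mu> \<le> real p / 2" using t unfolding \<mu>_def by auto
  have sineq: "sin (th / 2) = sin (pi * real \<mu> / real p)"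
  proof (cases "t \<le> p - t")
    case True thus ?thesis unfolding th_def \<mu>_def by (simp add: min_def)
  next
    case False
    hence "\<mu> = p - t" unfolding \<mu>_def by simp
    hence "pi * real \<mu> / real p = pi - th/2" unfolding th_def using t p
      by (simp add: of_nat_diff field_simps)
    thus ?thesis by simp
  qed
  have x0: "0 \<le> pi * real \<mu> / real p" by simp
  have x1: "pi * real \<mu> / real p \<le> pi / 2" using mu p
    by (simp add: field_simps)
  have sl: "pi * real \<mu> / real p / 3 \<le> sin (th/2)"
    using sin_lower[OF x0 x1] sineq by simp
  have pos: "0 < pi * real \<mu> / real p / 3" using mu p by simp
  have n1: "cmod (1 - w) = 2 * sin (th/2)"
    using w norm_one_minus_cis[of th] sl pos by simp
  have n1pos: "cmod (1 - w) > 0" using n1 sl pos by linarith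
  hence w1: "w \<noteq> 1" by auto
  have "cmod (\<Sum>m<L. w ^ m) = cmod (1 - w^L) / cmod (1 - w)"
    using w1 by (simp add: sum_gp_strict norm_divide)
  also have "\<dots> \<le> 2 / cmod (1 - w)"
  proof (intro divide_right_mono)
    have "cmod (1 - w^L) \<le> cmod 1 + cmod (w^L)" by (rule norm_triangle_ineq4)
    also have "\<dots> = 2" by (simp add: w norm_power)
    finally show "cmod (1 - w^L) \<le> 2" .
  qed simp
  also have "\<dots> \<le> 2 / (2 * (pi * real \<mu> / real p / 3))"
  proof (rule divide_left_mono)
    show "2 * (pi * real \<mu> / real p / 3) \<le> cmod (1 - w)" using n1 sl by linarith
    show "0 < cmod (1 - w) * (2 * (pi * real \<mu> / real p / 3))" using n1pos pos by (intro mult_pos_pos) auto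
  qed simp
  also have "\<dots> = 3 * real p / (pi * real \<mu>)" using p mu by (simp add: field_simps)
  also have "\<dots> \<le> 3 * real p / (2 * real \<mu>)"
    using pi_ge_two mu p by (intro divide_left_mono mult_right_mono) auto
  also have "\<dots> \<le> 2 * real p * (1 / real \<mu>)" using mu by (simp add: field_simps)
  also have "\<dots> \<le> 2 * real p * (1 / real t + 1 / real (p - t))"
  proof -
    have "1 / real \<mu> \<le> 1 / real t + 1 / real (p - t)"
      unfolding \<mu>_def using t by (auto simp: min_def)
    thus ?thesis using p by (intro mult_left_mono) auto
  qed
  finally show ?thesis unfolding w_def .
qed



lemma all_coeff_dvd_poly:
  fixes f :: "int poly"
  assumes "\<forall>i. P dvd Polynomial.coeff f i" shows "P dvd poly f x"
  using assms by (simp add: poly_altdef dvd_sum)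

lemma root_count:
  fixes f :: "int poly" and c :: int
  assumes p: "prime p" and nz: "\<exists>i. \<not> int p dvd Polynomial.coeff f i"
  shows "card {x\<in>{c..<c+int p}. int p dvd poly f x} \<le> degree f"
  using nz
proof (induction "degree f" arbitrary: f rule: less_induct)
  case (less f)
  define P where "P = int p"
  have pr: "prime P" using p unfolding P_def by simp
  define A where "A = {x\<in>{c..<c+P}. P dvd poly f x}"
  show ?case
  proof (cases "A = {}")
    case True
    hence "card A = 0" by simp
    thus ?thesis unfolding A_def P_def by simp
  next
    case False
    then obtain r where r: "r \<in> {c..<c+P}" "P dvd poly f r" unfolding A_def by auto
    define q where "q = synthetic_div f r"
    define v where "v = poly f r"
    have fq: "f = [:-r, 1:] * q + [:v:]" unfolding q_def v_def
      by (rule synthetic_div_correct'[symmetric])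
    have qnz: "\<exists>i. \<not> P dvd Polynomial.coeff q i"
    proof (rule ccontr)
      assume "\<not> ?thesis"
      hence allq: "\<forall>i. P dvd Polynomial.coeff q i" by simp
      have "P dvd Polynomial.coeff f i" for i
      proof -
        have "P dvd Polynomial.coeff ([:-r, 1:] * q) i"
          unfolding coeff_mult using allq by (intro dvd_sum) auto
        moreover have "P dvd Polynomial.coeff [:v:] i" using r(2) unfolding v_def by (cases i) auto
        ultimately show ?thesis by (subst fq) (simp add: coeff_add)
      qed
      with less.prems show False unfolding P_def by blast
    qed
    hence q0: "q \<noteq> 0" by auto
    have dq: "degree q < degree f"
    proof -
      have "degree ([:-r, 1:] * q) = degree [:-r, 1:] + degree q" by (rule degree_mult_eq) (use q0 in auto)
      also have "\<dots> = degree q + 1" by simp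
      finally have "degree ([:-r, 1:] * q) = degree q + 1" .
      moreover have "degree f = degree ([:-r, 1:] * q)"
        using fq q0 by (metis add.commute degree_add_eq_right degree_pCons_0 calculation less_add_one
              add_gr_0 zero_less_one)
      ultimately show ?thesis by simp
    qed
    have IH: "card {x\<in>{c..<c+P}. P dvd poly q x} \<le> degree q"
      using less.hyps[OF dq] qnz unfolding P_def by blast
    have sub: "A \<subseteq> insert r {x\<in>{c..<c+P}. P dvd poly q x}"
    proof
      fix x assume x: "x \<in> A"
      have "P dvd poly f x" using x unfolding A_def by auto
      moreover have "poly f x = (x - r) * poly q x + v" by (subst fq) (simp add: algebra_simps)
      ultimately have "P dvd (x - r) * poly q x" using r(2) unfolding v_def
        by (metis dvd_add_left_iff)
      hence "P dvd (x - r) \<or> P dvd poly q x" using pr prime_dvd_mult_iff by blast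
      moreover have "P dvd (x - r) \<Longrightarrow> x = r"
      proof -
        assume "P dvd x - r"
        then obtain k where k: "x - r = P * k" by blast
        have "\<bar>x - r\<bar> < P" using x r(1) unfolding A_def by auto
        hence "k = 0" using k pr by (cases "k = 0") (auto simp: abs_mult prime_gt_0_int, 
              smt (verit) mult_le_cancel_left1 prime_gt_1_int)
        thus "x = r" using k by simp
      qed
      ultimately show "x \<in> insert r {x\<in>{c..<c+P}. P dvd poly q x}" using x unfolding A_def by auto
    qed
    have "card A \<le> card (insert r {x\<in>{c..<c+P}. P dvd poly q x})"
      by (rule card_mono) (use sub in \<open>auto intro: finite_subset[of _ "{c..<c+P}"]\<close>)
    also have "\<dots> \<le> card {x\<in>{c..<c+P}. P dvd poly q x} + 1" by (simp add: card_insert_le_m1)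
    also have "\<dots> \<le> degree f" using IH dq by simp
    finally show ?thesis unfolding A_def P_def .
  qed
qed



definition Fpoly :: "nat \<Rightarrow> (nat \<Rightarrow> int) \<Rightarrow> int \<Rightarrow> int poly" where
  "Fpoly s a t = (\<Sum>j<s. Polynomial.smult (a j) (\<Prod>i\<in>{..<s}-{j}. [:int i, 1:]))
      + Polynomial.smult t (\<Prod>i<s. [:int i, 1:])"

lemma degree_lin_prod: "finite J \<Longrightarrow> degree (\<Prod>i\<in>J. [:int i, 1:]) = card J"
  by (subst degree_prod_eq_sum_degree) auto

lemma Fpoly_degree: "degree (Fpoly s a t) \<le> s"
proof -
  have "degree (\<Sum>j<s. Polynomial.smult (a j) (\<Prod>i\<in>{..<s}-{j}. [:int i, 1:])) \<le> s"
  proof (rule degree_sum_le)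
    fix j assume "j \<in> {..<s}"
    have "degree (Polynomial.smult (a j) (\<Prod>i\<in>{..<s}-{j}. [:int i, 1:]))
         \<le> degree (\<Prod>i\<in>{..<s}-{j}. [:int i, 1:])" by (rule degree_smult_le)
    also have "\<dots> = card ({..<s}-{j})" by (rule degree_lin_prod) simp
    also have "\<dots> \<le> s" by (metis card_Diff1_le card_lessThan finite_lessThan)
    finally show "degree (Polynomial.smult (a j) (\<Prod>i\<in>{..<s}-{j}. [:int i, 1:])) \<le> s" .
  qed simp
  moreover have "degree (Polynomial.smult t (\<Prod>i<s. [:int i, 1:])) \<le> s"
    by (metis card_lessThan degree_lin_prod degree_smult_le finite_lessThan)
  ultimately show ?thesis unfolding Fpoly_def by (meson degree_add_le)
qed

lemma Fpoly_eval: "poly (Fpoly s a t) x = (\<Sum>j<s. a j * (\<Prod>i\<in>{..<s}-{j}. x + int i)) + t * (\<Prod>i<s. x + int i)"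
  unfolding Fpoly_def by (simp add: poly_sum poly_prod add.commute)

lemma small_not_dvd: fixes d P :: int assumes "d \<noteq> 0" "\<bar>d\<bar> < P" shows "\<not> P dvd d"
  using dvd_imp_le_int[OF assms(1)] assms(2) by force

lemma Fpoly_nz:
  assumes p: "prime p" and s: "1 \<le> s" "s < p" and j0: "j0 < s" "\<not> int p dvd a j0"
    and t: "0 \<le> t" "t < int p"
  shows "\<exists>i. \<not> int p dvd Polynomial.coeff (Fpoly s a t) i"
proof (cases "t = 0")
  case False
  have c1: "Polynomial.coeff (\<Sum>j<s. Polynomial.smult (a j) (\<Prod>i\<in>{..<s}-{j}. [:int i, 1:])) s = 0"
  proof -
    have h: "Polynomial.coeff (Polynomial.smult (a j) (\<Prod>i\<in>{..<s}-{j}. [:int i, 1:])) s = 0" if "j < s" for j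
    proof -
      have "degree (\<Prod>i\<in>{..<s}-{j}. [:int i, 1:]) = card ({..<s}-{j})" by (rule degree_lin_prod) simp
      also have "\<dots> = s - 1" using that by simp
      finally have "degree (\<Prod>i\<in>{..<s}-{j}. [:int i, 1:]) < s" using s by simp
      thus ?thesis by (simp add: coeff_eq_0)
    qed
    show ?thesis unfolding coeff_sum by (rule sum.neutral) (use h in blast)
  qed
  have c2: "Polynomial.coeff (\<Prod>i<s. [:int i, 1:]) s = 1"
  proof -
    have "Polynomial.coeff (\<Prod>i<s. [:int i, 1:]) s = lead_coeff (\<Prod>i<s. [:int i, 1:])"
      using degree_lin_prod[of "{..<s}"] by simp
    also have "\<dots> = 1" by (simp add: lead_coeff_prod)
    finally show ?thesis .
  qed
  have "Polynomial.coeff (Fpoly s a t) s = t" unfolding Fpoly_def using c1 c2 by simp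
  moreover have "\<not> int p dvd t" using False t by (intro small_not_dvd) auto
  ultimately show ?thesis by metis
next
  case True
  define x where "x = - int j0"
  have v: "poly (Fpoly s a t) x = a j0 * (\<Prod>i\<in>{..<s}-{j0}. x + int i)"
  proof -
    have "(\<Sum>j<s. a j * (\<Prod>i\<in>{..<s}-{j}. x + int i)) = (\<Sum>j\<in>{j0}. a j * (\<Prod>i\<in>{..<s}-{j}. x + int i))"
    proof (rule sum.mono_neutral_right)
      show "\<forall>j\<in>{..<s} - {j0}. a j * (\<Prod>i\<in>{..<s}-{j}. x + int i) = 0"
      proof
        fix j assume "j \<in> {..<s} - {j0}"
        hence "j0 \<in> {..<s}-{j}" using j0 by auto
        hence "(\<Prod>i\<in>{..<s}-{j}. x + int i) = 0" unfolding x_def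
          by (intro prod_zero bexI[of _ j0]) auto
        thus "a j * (\<Prod>i\<in>{..<s}-{j}. x + int i) = 0" by simp
      qed
    qed (use j0 in auto)
    thus ?thesis unfolding Fpoly_eval True by simp
  qed
  have pr: "prime (int p)" using p by simp
  have "\<not> int p dvd (\<Prod>i\<in>{..<s}-{j0}. x + int i)"
  proof
    assume "int p dvd (\<Prod>i\<in>{..<s}-{j0}. x + int i)"
    then obtain i where i: "i \<in> {..<s}-{j0}" "int p dvd x + int i"
      by (metis finite_Diff finite_lessThan prime_dvd_prod_iff pr)
    have "x + int i \<noteq> 0" "\<bar>x + int i\<bar> < int p" using i j0 s unfolding x_def by auto
    thus False using small_not_dvd i by blast
  qed
  hence "\<not> int p dvd poly (Fpoly s a t) x" unfolding v using j0 pr prime_dvd_mult_iff by blast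
  thus ?thesis using all_coeff_dvd_poly by blast
qed

lemma Fpoly_root:
  fixes x t :: int
  assumes p: "prime p" and nd: "\<forall>j<s. \<not> int p dvd x + int j"
    and c: "[(\<Sum>j<s. a j * (x + int j) ^ (p - 2)) + t = 0] (mod int p)"
  shows "int p dvd poly (Fpoly s a t) x"
proof -
  define PP where "PP = (\<Prod>i<s. x + int i)"
  have p2: "p \<ge> 2" using p prime_ge_2_nat by blast
  have tm: "[a j * (\<Prod>i\<in>{..<s}-{j}. x + int i) = a j * (x + int j) ^ (p - 2) * PP] (mod int p)"
    if j: "j < s" for j
  proof -
    have hP: "PP = (x + int j) * (\<Prod>i\<in>{..<s}-{j}. x + int i)"
      unfolding PP_def using j by (simp add: prod.remove)
    have pw: "(x + int j)^(p-1) = (x+int j)^(p-2) * (x+int j)"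
    proof -
      have "p - 1 = Suc (p - 2)" using p2 by simp
      thus ?thesis by (simp add: power_Suc2)
    qed
    have e: "a j * (x + int j) ^ (p - 2) * PP = a j * (\<Prod>i\<in>{..<s}-{j}. x + int i) * (x + int j) ^ (p - 1)"
      unfolding pw hP by (simp only: mult_ac)
    have "[(x + int j) ^ (p - 1) = 1] (mod int p)" using fermat_int[OF p] nd j by blast
    hence "[a j * (\<Prod>i\<in>{..<s}-{j}. x + int i) * (x + int j) ^ (p - 1) = a j * (\<Prod>i\<in>{..<s}-{j}. x + int i) * 1] (mod int p)"
      by (rule cong_mult[OF cong_refl])
    thus ?thesis unfolding e by (simp add: cong_sym)
  qed
  have "[poly (Fpoly s a t) x = (\<Sum>j<s. a j * (x + int j) ^ (p - 2) * PP) + t * PP] (mod int p)"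
    unfolding Fpoly_eval PP_def[symmetric] by (intro cong_add cong_sum cong_refl tm) auto
  also have "(\<Sum>j<s. a j * (x + int j) ^ (p - 2) * PP) + t * PP = ((\<Sum>j<s. a j * (x + int j) ^ (p - 2)) + t) * PP"
    by (simp add: sum_distrib_right distrib_right)
  also have "[\<dots> = 0 * PP] (mod int p)" by (rule cong_mult[OF c cong_refl])
  finally show ?thesis by (simp add: cong_0_iff)
qed



definition Bf :: "nat \<Rightarrow> nat \<Rightarrow> real" where
  "Bf p t = (if t = 0 then real p else 2 * real p * (1 / real t + 1 / real (p - t)))"

lemma Bf_nonneg: "t \<le> p \<Longrightarrow> Bf p t \<ge> 0"
  unfolding Bf_def by auto

lemma harm_le_ln: "n \<ge> 1 \<Longrightarrow> harm n \<le> 1 + ln (real n)"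
  using euler_mascheroni_sequence_decreasing[of 1 n] by (simp add: harm_def)

lemma sum_rev_inv: "(\<Sum>t=1..p-1. 1 / real (p - t)) = (\<Sum>t=1..p-1. 1 / real t)"
  by (rule sum.reindex_bij_witness[of _ "\<lambda>t. p - t" "\<lambda>t. p - t"]) auto

lemma Bf_sum:
  assumes p: "p \<ge> 2"
  shows "(\<Sum>t<p. Bf p t) \<le> real p * (5 + 4 * ln (real p))"
proof -
  have "{..<p} = insert 0 {1..p-1}" using p by auto
  hence "(\<Sum>t<p. Bf p t) = Bf p 0 + (\<Sum>t=1..p-1. Bf p t)" by simp
  also have "(\<Sum>t=1..p-1. Bf p t) = 2 * real p * ((\<Sum>t=1..p-1. 1 / real t) + (\<Sum>t=1..p-1. 1 / real (p - t)))"
  proof -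
    have "(\<Sum>t=1..p-1. Bf p t) = (\<Sum>t=1..p-1. 2 * real p * (1 / real t + 1 / real (p - t)))"
      by (rule sum.cong) (auto simp: Bf_def)
    thus ?thesis by (simp add: sum.distrib[symmetric] sum_distrib_left)
  qed
  also have "\<dots> = 4 * real p * harm (p - 1)"
    unfolding sum_rev_inv harm_def by (simp add: divide_inverse)
  also have "harm (p - 1) \<le> 1 + ln (real p)"
  proof -
    have "harm (p - 1) \<le> 1 + ln (real (p - 1))" using p by (intro harm_le_ln) auto
    also have "ln (real (p - 1)) \<le> ln (real p)" using p by (subst ln_le_cancel_iff) auto
    finally show ?thesis by simp
  qed
  hence "4 * real p * harm (p - 1) \<le> 4 * real p * (1 + ln (real p))" by (intro mult_left_mono) auto
  finally show ?thesis unfolding Bf_def by (simp add: algebra_simps)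
qed

lemma L_iff:
  fixes p n \<rho> m :: nat
  assumes "p > 0"
  shows "m < (if \<rho> < n then (n - \<rho> - 1) div p + 1 else 0) \<longleftrightarrow> \<rho> + p * m < n"
proof (cases "\<rho> < n")
  case True
  have "m < (n - \<rho> - 1) div p + 1 \<longleftrightarrow> m \<le> (n - \<rho> - 1) div p" by auto
  also have "\<dots> \<longleftrightarrow> m * p \<le> n - \<rho> - 1" using assms by (rule less_eq_div_iff_mult_less_eq)
  also have "\<dots> \<longleftrightarrow> \<rho> + p * m < n" using True by (auto simp: mult.commute)
  finally show ?thesis using True by simp
qed simp

lemma L_le:
  fixes p n \<rho> :: nat
  assumes "p > 0" "n \<le> p * p"
  shows "(if \<rho> < n then (n - \<rho> - 1) div p + 1 else 0) \<le> p"
proof (cases "\<rho> < n")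
  case True
  have "(n - \<rho> - 1) div p < p" using assms True by (simp add: div_less_iff_less_mult)
  thus ?thesis using True by simp
qed simp

lemma decomp:
  fixes g :: "nat \<Rightarrow> 'b::comm_monoid_add" and p n :: nat
  assumes p: "p > 0"
  defines "L \<equiv> \<lambda>\<rho>. (if \<rho> < n then (n - \<rho> - 1) div p + 1 else 0)"
  shows "(\<Sum>d<n. g d) = (\<Sum>\<rho><p. \<Sum>m<L \<rho>. g (\<rho> + p * m))"
proof -
  have bij: "bij_betw (\<lambda>(\<rho>, m). \<rho> + p * m) (SIGMA \<rho>:{..<p}. {..<L \<rho>}) {..<n}"
  proof (rule bij_betwI[where g = "\<lambda>d. (d mod p, d div p)"])
    show "(\<lambda>(\<rho>, m). \<rho> + p * m) \<in> (SIGMA \<rho>:{..<p}. {..<L \<rho>}) \<rightarrow> {..<n}"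
      using L_iff[OF p] unfolding L_def by auto
    show "(\<lambda>d. (d mod p, d div p)) \<in> {..<n} \<rightarrow> (SIGMA \<rho>:{..<p}. {..<L \<rho>})"
    proof
      fix d assume d: "d \<in> {..<n}"
      have "d mod p + p * (d div p) < n" using d by simp
      thus "(d mod p, d div p) \<in> (SIGMA \<rho>:{..<p}. {..<L \<rho>})"
        using L_iff[OF p, of "d div p" "d mod p" n] p unfolding L_def by auto
    qed
    show "(\<lambda>d. (d mod p, d div p)) ((\<lambda>(\<rho>, m). \<rho> + p * m) x) = x"
      if "x \<in> (SIGMA \<rho>:{..<p}. {..<L \<rho>})" for x
      using that p by (cases x) auto
    show "(\<lambda>(\<rho>, m). \<rho> + p * m) ((\<lambda>d. (d mod p, d div p)) d) = d" for d
      by simp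
  qed
  have "(\<Sum>d<n. g d) = (\<Sum>x\<in>(SIGMA \<rho>:{..<p}. {..<L \<rho>}). g ((\<lambda>(\<rho>, m). \<rho> + p * m) x))"
    using sum.reindex_bij_betw[OF bij, of g] by simp
  also have "\<dots> = (\<Sum>(\<rho>,m)\<in>(SIGMA \<rho>:{..<p}. {..<L \<rho>}). g (\<rho> + p * m))"
    by (rule sum.cong) auto
  also have "\<dots> = (\<Sum>\<rho><p. \<Sum>m<L \<rho>. g (\<rho> + p * m))"
    by (rule sum.Sigma[symmetric]) auto
  finally show ?thesis .
qed



definition Phi :: "nat \<Rightarrow> nat \<Rightarrow> (nat \<Rightarrow> int) \<Rightarrow> int \<Rightarrow> int" where
  "Phi s p a u = (\<Sum>j<s. a j * fermat_quotient p (u + int j))"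

definition Gf :: "nat \<Rightarrow> nat \<Rightarrow> (nat \<Rightarrow> int) \<Rightarrow> int \<Rightarrow> int" where
  "Gf s p a u = (\<Sum>j<s. a j * (u + int j) ^ (p - 2))"

lemma phi_shift:
  assumes p: "prime p" and nd: "\<forall>j<s. \<not> int p dvd u + int j"
  shows "[Phi s p a (u + int p * k) = Phi s p a u + k * ((- Gf s p a u) mod int p)] (mod int p)"
proof -
  have "[Phi s p a (u + int p * k) = (\<Sum>j<s. a j * (fermat_quotient p (u + int j) - k * (u + int j) ^ (p - 2)))] (mod int p)"
    unfolding Phi_def
  proof (intro cong_sum cong_mult cong_refl)
    fix j assume j: "j \<in> {..<s}"
    have e: "u + int p * k + int j = (u + int j) + int p * k" by simp
    show "[fermat_quotient p (u + int p * k + int j) = fermat_quotient p (u + int j) - k * (u + int j) ^ (p - 2)] (mod int p)"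
      unfolding e by (rule fq_shift[OF p]) (use nd j in auto)
  qed
  also have "(\<Sum>j<s. a j * (fermat_quotient p (u + int j) - k * (u + int j) ^ (p - 2))) = Phi s p a u - k * Gf s p a u"
    unfolding Phi_def Gf_def by (simp add: sum_subtractf sum_distrib_left algebra_simps)
  also have "[Phi s p a u - k * Gf s p a u = Phi s p a u + k * ((- Gf s p a u) mod int p)] (mod int p)"
  proof -
    have "[k * (- Gf s p a u) = k * ((- Gf s p a u) mod int p)] (mod int p)"
      by (intro cong_mult cong_refl) (simp add: cong_def)
    hence "[Phi s p a u + k * (- Gf s p a u) = Phi s p a u + k * ((- Gf s p a u) mod int p)] (mod int p)"
      by (intro cong_add cong_refl)
    thus ?thesis by simp
  qed
  finally show ?thesis .
qed

lemma block_bound: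
  assumes p: "prime p" and nd: "\<forall>j<s. \<not> int p dvd u + int j" and L: "L \<le> p"
  shows "cmod (\<Sum>m<L. e_p p (Phi s p a (u + int p * int m))) \<le> Bf p (nat ((- Gf s p a u) mod int p))"
proof -
  define t where "t = (- Gf s p a u) mod int p"
  have p0: "p > 0" using p prime_gt_0_nat by blast
  have t0: "0 \<le> t" "t < int p" unfolding t_def using p0 by auto
  have "e_p p (Phi s p a (u + int p * int m)) = e_p p (Phi s p a u) * e_p p t ^ m" for m
  proof -
    have "e_p p (Phi s p a (u + int p * int m)) = e_p p (Phi s p a u + int m * t)"
      using e_p_cong[OF p0 phi_shift[OF p nd, of a "int m"]] unfolding t_def .
    also have "\<dots> = e_p p (Phi s p a u) * e_p p t ^ m" by (simp add: e_p_add e_p_mult_nat)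
    finally show ?thesis .
  qed
  hence "(\<Sum>m<L. e_p p (Phi s p a (u + int p * int m))) = e_p p (Phi s p a u) * (\<Sum>m<L. e_p p t ^ m)"
    by (simp add: sum_distrib_left)
  hence n: "cmod (\<Sum>m<L. e_p p (Phi s p a (u + int p * int m))) = cmod (\<Sum>m<L. e_p p t ^ m)"
    by (simp add: norm_mult)
  show ?thesis
  proof (cases "t = 0")
    case True
    thus ?thesis unfolding n using L by (simp add: t_def[symmetric] Bf_def)
  next
    case False
    define tn where "tn = nat t"
    have tn: "0 < tn" "tn < p" "int tn = t" using t0 False unfolding tn_def by auto
    have "cmod (\<Sum>m<L. e_p p (int tn) ^ m) \<le> 2 * real p * (1 / real tn + 1 / real (p - tn))"
      by (rule geom_bound) (use p0 tn in auto)
    thus ?thesis unfolding n using tn by (simp add: t_def[symmetric] tn_def[symmetric] Bf_def)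
  qed
qed



lemma S_reindex:
  assumes "N \<ge> 1"
  shows "S_sum s p M N a = (\<Sum>d<nat N. e_p p (Phi s p a (M + 1 + int d)))"
  unfolding S_sum_def Phi_def
  by (rule sum.reindex_bij_witness[of _ "\<lambda>d. M + 1 + int d" "\<lambda>u. nat (u - M - 1)"]) (use assms in auto)

lemma card_D:
  assumes p: "prime p"
  shows "card {\<rho>\<in>{..<p}. \<exists>j<s. int p dvd (M + 1 + int \<rho>) + int j} \<le> s"
proof -
  define A where "A = (\<lambda>j. {\<rho>\<in>{..<p}. int p dvd (M + 1 + int \<rho>) + int j})"
  have sub: "{\<rho>\<in>{..<p}. \<exists>j<s. int p dvd (M + 1 + int \<rho>) + int j} = (\<Union>j<s. A j)"
    unfolding A_def by auto
  have c1: "card (A j) \<le> 1" for j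
  proof -
    have "\<forall>x\<in>A j. \<forall>y\<in>A j. x = y"
    proof (intro ballI)
      fix x y assume x: "x \<in> A j" and y: "y \<in> A j"
      have "int p dvd ((M + 1 + int x) + int j) - ((M + 1 + int y) + int j)"
        using x y unfolding A_def by (intro dvd_diff) auto
      hence d: "int p dvd int x - int y" by simp
      show "x = y"
      proof (rule ccontr)
        assume "x \<noteq> y"
        hence "int x - int y \<noteq> 0" "\<bar>int x - int y\<bar> < int p" using x y unfolding A_def by auto
        with d small_not_dvd show False by blast
      qed
    qed
    moreover have "finite (A j)" unfolding A_def by auto
    ultimately show ?thesis using card_le_Suc0_iff_eq by fastforce
  qed
  have "card (\<Union>j<s. A j) \<le> (\<Sum>j<s. card (A j))" by (rule card_UN_le) simp
  also have "\<dots> \<le> (\<Sum>j<s. 1)" by (rule sum_mono) (rule c1)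
  finally show ?thesis unfolding sub by simp
qed

lemma card_fiber:
  fixes M :: int
  assumes p: "prime p" and s: "1 \<le> s" "s < p" and j0: "j0 < s" "\<not> int p dvd a j0" and t: "t < p"
  defines "ND \<equiv> {\<rho>\<in>{..<p}. \<forall>j<s. \<not> int p dvd (M + 1 + int \<rho>) + int j}"
  shows "card {\<rho>\<in>ND. nat ((- Gf s p a (M + 1 + int \<rho>)) mod int p) = t} \<le> s"
proof -
  define Fi where "Fi = {\<rho>\<in>ND. nat ((- Gf s p a (M + 1 + int \<rho>)) mod int p) = t}"
  define R where "R = {x\<in>{M+1..<M+1+int p}. int p dvd poly (Fpoly s a (int t)) x}"
  have p0: "int p > 0" using p prime_gt_0_nat by auto
  have inj: "inj_on (\<lambda>\<rho>. M + 1 + int \<rho>) Fi" by (auto simp: inj_on_def)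
  have img: "(\<lambda>\<rho>. M + 1 + int \<rho>) ` Fi \<subseteq> R"
  proof
    fix x assume "x \<in> (\<lambda>\<rho>. M + 1 + int \<rho>) ` Fi"
    then obtain \<rho> where r: "\<rho> \<in> Fi" "x = M + 1 + int \<rho>" by blast
    have nd: "\<forall>j<s. \<not> int p dvd x + int j" using r unfolding Fi_def ND_def by auto
    have tt: "int t = (- Gf s p a x) mod int p" using r p0 unfolding Fi_def by auto
    have "[Gf s p a x + int t = Gf s p a x + (- Gf s p a x)] (mod int p)"
      unfolding tt by (intro cong_add cong_refl) (simp add: cong_def)
    hence "[(\<Sum>j<s. a j * (x + int j) ^ (p - 2)) + int t = 0] (mod int p)"
      unfolding Gf_def by simp
    hence "int p dvd poly (Fpoly s a (int t)) x" by (rule Fpoly_root[OF p nd])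
    moreover have "x \<in> {M+1..<M+1+int p}" using r unfolding Fi_def ND_def by auto
    ultimately show "x \<in> R" unfolding R_def by auto
  qed
  have "card Fi = card ((\<lambda>\<rho>. M + 1 + int \<rho>) ` Fi)" using inj by (simp add: card_image)
  also have "\<dots> \<le> card R" by (rule card_mono) (use img in \<open>auto simp: R_def intro: finite_subset[of _ "{M+1..<M+1+int p}"]\<close>)
  also have "\<dots> \<le> degree (Fpoly s a (int t))" unfolding R_def
    by (rule root_count[OF p]) (rule Fpoly_nz[of p s j0 a "int t"], use p s j0 t in auto)
  also have "\<dots> \<le> s" by (rule Fpoly_degree)
  finally show ?thesis unfolding Fi_def .
qed



theorem theorem11:
  fixes s :: nat
  assumes "s \<ge> 1"
  shows "\<exists>c>0. \<forall>(p::nat) (M::int) (N::int) (a::nat \<Rightarrow> int).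
           prime p \<longrightarrow> 1 \<le> N \<longrightarrow> N < int p ^ 2 \<longrightarrow>
           Gcd (insert (int p) (a ` {..<s})) = 1 \<longrightarrow>
           cmod (S_sum s p M N a) \<le> c * real s * real p * ln (real p)"
proof (intro exI[of _ 13] conjI allI impI)
  fix p :: nat and M N :: int and a :: "nat \<Rightarrow> int"
  assume p: "prime p" and N1: "1 \<le> N" and Np: "N < int p ^ 2"
    and g: "Gcd (insert (int p) (a ` {..<s})) = 1"
  define n where "n = nat N"
  have p2: "p \<ge> 2" using p prime_ge_2_nat by blast
  have p0: "p > 0" using p2 by simp
  have np: "n < p * p" using Np N1 unfolding n_def by (simp add: power2_eq_square nat_less_iff)
  have lnp: "ln (real p) \<ge> 2/3"
  proof -
    have "ln 2 \<le> ln (real p)" using p2 by (subst ln_le_cancel_iff) auto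
    thus ?thesis using ln2_ge_two_thirds by linarith
  qed
  define g where "g = (\<lambda>d. e_p p (Phi s p a (M + 1 + int d)))"
  have S: "S_sum s p M N a = (\<Sum>d<n. g d)" unfolding n_def g_def by (rule S_reindex[OF N1])
  show "cmod (S_sum s p M N a) \<le> 13 * real s * real p * ln (real p)"
  proof (cases "s < p")
    case False
    have "cmod (S_sum s p M N a) \<le> (\<Sum>d<n. cmod (g d))" unfolding S by (rule norm_sum)
    also have "\<dots> = real n" by (simp add: g_def)
    also have "\<dots> \<le> real p * real p" using np by (simp add: of_nat_mult[symmetric] del: of_nat_mult)
    also have "\<dots> \<le> real s * real p" using False by (intro mult_right_mono) auto
    also have "\<dots> \<le> 13 * real s * real p * ln (real p)"
    proof -
      have "1 \<le> 13 * ln (real p)" using lnp by linarith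
      hence "real s * real p * 1 \<le> real s * real p * (13 * ln (real p))" by (intro mult_left_mono) auto
      thus ?thesis by (simp add: algebra_simps)
    qed
    finally show ?thesis .
  next
    case True
    have sp: "1 \<le> s" "s < p" using assms True by auto
    obtain j0 where j0: "j0 < s" "\<not> int p dvd a j0"
    proof (rule ccontr)
      assume "\<not> thesis"
      with that have "\<forall>j<s. int p dvd a j" by blast
      hence "int p dvd Gcd (insert (int p) (a ` {..<s}))" by (intro Gcd_greatest) auto
      hence "int p dvd 1" using g by simp
      thus False using p2 by simp
    qed
    define L where "L = (\<lambda>\<rho>. (if \<rho> < n then (n - \<rho> - 1) div p + 1 else 0))"
    define b where "b = (\<lambda>\<rho>::nat. M + 1 + int \<rho>)"
    define T where "T = (\<lambda>\<rho>. \<Sum>m<L \<rho>. e_p p (Phi s p a (b \<rho> + int p * int m)))"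
    have Lp: "L \<rho> \<le> p" for \<rho> unfolding L_def by (rule L_le[OF p0 less_imp_le[OF np]])
    have "(\<Sum>d<n. g d) = (\<Sum>\<rho><p. \<Sum>m<L \<rho>. g (\<rho> + p * m))"
      unfolding L_def by (rule decomp[OF p0])
    also have "\<dots> = (\<Sum>\<rho><p. T \<rho>)" unfolding T_def g_def b_def
      by (intro sum.cong refl) (simp add: add.assoc)
    finally have ST: "S_sum s p M N a = (\<Sum>\<rho><p. T \<rho>)" using S by simp
    define D where "D = {\<rho>\<in>{..<p}. \<exists>j<s. int p dvd (M + 1 + int \<rho>) + int j}"
    define ND where "ND = {\<rho>\<in>{..<p}. \<forall>j<s. \<not> int p dvd (M + 1 + int \<rho>) + int j}"
    define \<tau> where "\<tau> = (\<lambda>\<rho>. nat ((- Gf s p a (b \<rho>)) mod int p))"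
    have DND: "{..<p} = D \<union> ND" "D \<inter> ND = {}" unfolding D_def ND_def by auto
    have "cmod (S_sum s p M N a) \<le> (\<Sum>\<rho><p. cmod (T \<rho>))" unfolding ST by (rule norm_sum)
    also have "\<dots> = (\<Sum>\<rho>\<in>D. cmod (T \<rho>)) + (\<Sum>\<rho>\<in>ND. cmod (T \<rho>))"
      unfolding DND(1) by (rule sum.union_disjoint) (use DND in \<open>auto simp: D_def ND_def\<close>)
    also have "(\<Sum>\<rho>\<in>D. cmod (T \<rho>)) \<le> real s * real p"
    proof -
      have "(\<Sum>\<rho>\<in>D. cmod (T \<rho>)) \<le> (\<Sum>\<rho>\<in>D. real p)"
      proof (rule sum_mono)
        fix \<rho> assume "\<rho> \<in> D"
        have "cmod (T \<rho>) \<le> (\<Sum>m<L \<rho>. cmod (e_p p (Phi s p a (b \<rho> + int p * int m))))"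
          unfolding T_def by (rule norm_sum)
        also have "\<dots> = real (L \<rho>)" by simp
        also have "\<dots> \<le> real p" using Lp by simp
        finally show "cmod (T \<rho>) \<le> real p" .
      qed
      also have "\<dots> = real (card D) * real p" by simp
      also have "\<dots> \<le> real s * real p"
        using card_D[OF p, of s M] unfolding D_def by (intro mult_right_mono) auto
      finally show ?thesis .
    qed
    also have "(\<Sum>\<rho>\<in>ND. cmod (T \<rho>)) \<le> (\<Sum>\<rho>\<in>ND. Bf p (\<tau> \<rho>))"
    proof (rule sum_mono)
      fix \<rho> assume r: "\<rho> \<in> ND"
      have nd: "\<forall>j<s. \<not> int p dvd b \<rho> + int j" using r unfolding ND_def b_def by auto
      show "cmod (T \<rho>) \<le> Bf p (\<tau> \<rho>)" unfolding T_def \<tau>_def by (rule block_bound[OF p nd Lp])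
    qed
    also have "(\<Sum>\<rho>\<in>ND. Bf p (\<tau> \<rho>)) = (\<Sum>t\<in>\<tau> ` ND. \<Sum>\<rho>\<in>{x\<in>ND. \<tau> x = t}. Bf p (\<tau> \<rho>))"
      by (rule sum.image_gen) (simp add: ND_def)
    also have "\<dots> = (\<Sum>t\<in>\<tau> ` ND. real (card {x\<in>ND. \<tau> x = t}) * Bf p t)"
      by (intro sum.cong refl) simp
    also have "\<dots> \<le> (\<Sum>t\<in>\<tau> ` ND. real s * Bf p t)"
    proof (rule sum_mono)
      fix t assume t: "t \<in> \<tau> ` ND"
      have tp: "t < p"
      proof -
        obtain \<rho> where "t = \<tau> \<rho>" using t by blast
        thus ?thesis unfolding \<tau>_def using p0 by (auto simp: nat_less_iff)
      qed
      have "card {x\<in>ND. \<tau> x = t} \<le> s"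
        using card_fiber[of p s j0 a t M] p sp j0 tp unfolding ND_def \<tau>_def b_def by simp
      thus "real (card {x\<in>ND. \<tau> x = t}) * Bf p t \<le> real s * Bf p t"
        using Bf_nonneg[of t p] tp by (intro mult_right_mono) auto
    qed
    also have "\<dots> \<le> (\<Sum>t<p. real s * Bf p t)"
    proof (rule sum_mono2)
      show "\<tau> ` ND \<subseteq> {..<p}" unfolding \<tau>_def using p0
        by (auto simp: nat_less_iff)
      show "\<And>t. t \<in> {..<p} - \<tau> ` ND \<Longrightarrow> 0 \<le> real s * Bf p t"
        using Bf_nonneg by auto
    qed simp
    also have "\<dots> = real s * (\<Sum>t<p. Bf p t)" by (simp add: sum_distrib_left)
    also have "\<dots> \<le> real s * (real p * (5 + 4 * ln (real p)))"
      by (intro mult_left_mono Bf_sum p2) auto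
    finally have fin: "cmod (S_sum s p M N a) \<le> real s * real p * (6 + 4 * ln (real p))"
      by (simp add: algebra_simps)
    have "6 + 4 * ln (real p) \<le> 13 * ln (real p)" using lnp by linarith
    hence "real s * real p * (6 + 4 * ln (real p)) \<le> real s * real p * (13 * ln (real p))"
      by (intro mult_left_mono) auto
    with fin show ?thesis by (simp add: algebra_simps)
  qed
qed simp


end
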